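(* Let $\Gamma$ be a groupoid over a set $B$ with source and target maps $\alpha,\beta:\Gamma\to B$, and let $L\subset\Gamma$. The following are equivalent: (1) there is a subset $K\subset\Gamma$ such that $LK=E_\Gamma$ and $KL=E_\Gamma$; (2) the restrictions $\alpha|_L:L\to B$ and $\beta|_L:L\to B$ are bijections.
   Context: A groupoid over a set $B$ is a set $\Gamma$ with surjections $\alpha,\beta:\Gamma\to B$, a product $\gamma_1\gamma_2$ defined when $\beta(\gamma_1)=\alpha(\gamma_2)$, identities $e_b$ ($b\in B$) and inverses $\gamma^{-1}$, satisfying $\alpha(\gamma_1\gamma_2)=\alpha(\gamma_1)$, $\beta(\gamma_1\gamma_2)=\beta(\gamma_2)$, $\alpha(e_b)=\beta(e_b)=b$, $\alpha(\gamma^{-1})=\beta(\gamma)$, $\beta(\gamma^{-1})=\alpha(\gamma)$, and the usual associativity, unit and inverse axioms. For subsets $L_1,L_2\subset\Gamma$, $L_1L_2=\{\gamma_1\gamma_2:\gamma_1\in L_1,\gamma_2\in L_2,\beta(\gamma_1)=\alpha(\gamma_2)\}$, and $E_\Gamma=\{e_b:b\in B\}$. *)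

theory Defs
  imports Main
begin

text \<open>A groupoid over a set B: carrier G, source/target maps src (alpha) and tgt (beta),
  a partial product mul (meaningful only when tgt g1 = src g2), identities e, inverses iv.\<close>

locale groupoid =
  fixes G :: "'g set" and B :: "'b set"
    and src :: "'g \<Rightarrow> 'b" and tgt :: "'g \<Rightarrow> 'b"
    and mul :: "'g \<Rightarrow> 'g \<Rightarrow> 'g"
    and e :: "'b \<Rightarrow> 'g" and iv :: "'g \<Rightarrow> 'g"
  assumes src_surj: "src ` G = B" and tgt_surj: "tgt ` G = B"
    and mul_closed: "\<lbrakk>g1 \<in> G; g2 \<in> G; tgt g1 = src g2\<rbrakk> \<Longrightarrow> mul g1 g2 \<in> G"
    and src_mul: "\<lbrakk>g1 \<in> G; g2 \<in> G; tgt g1 = src g2\<rbrakk> \<Longrightarrow> src (mul g1 g2) = src g1"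
    and tgt_mul: "\<lbrakk>g1 \<in> G; g2 \<in> G; tgt g1 = src g2\<rbrakk> \<Longrightarrow> tgt (mul g1 g2) = tgt g2"
    and mul_assoc: "\<lbrakk>g1 \<in> G; g2 \<in> G; g3 \<in> G; tgt g1 = src g2; tgt g2 = src g3\<rbrakk>
        \<Longrightarrow> mul (mul g1 g2) g3 = mul g1 (mul g2 g3)"
    and e_closed: "b \<in> B \<Longrightarrow> e b \<in> G"
    and src_e: "b \<in> B \<Longrightarrow> src (e b) = b"
    and tgt_e: "b \<in> B \<Longrightarrow> tgt (e b) = b"
    and e_left: "g \<in> G \<Longrightarrow> mul (e (src g)) g = g"
    and e_right: "g \<in> G \<Longrightarrow> mul g (e (tgt g)) = g"
    and inv_closed: "g \<in> G \<Longrightarrow> iv g \<in> G"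
    and src_inv: "g \<in> G \<Longrightarrow> src (iv g) = tgt g"
    and tgt_inv: "g \<in> G \<Longrightarrow> tgt (iv g) = src g"
    and inv_left: "g \<in> G \<Longrightarrow> mul (iv g) g = e (tgt g)"
    and inv_right: "g \<in> G \<Longrightarrow> mul g (iv g) = e (src g)"
begin

definition setmul :: "'g set \<Rightarrow> 'g set \<Rightarrow> 'g set" where
  "setmul L1 L2 = {mul g1 g2 | g1 g2. g1 \<in> L1 \<and> g2 \<in> L2 \<and> tgt g1 = src g2}"

definition units :: "'g set" where
  "units = e ` B"

end

end

theory Submission
  imports Defs
begin

context groupoid
begin

lemma right_uniq:
  assumes "g \<in> G" "h \<in> G" "tgt g = src h" "mul g h = e b" "b \<in> B"
  shows "h = iv g"
proof -
  have sb: "src g = b" using src_mul[OF assms(1-3)] assms src_e by simp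
  have "h = mul (e (src h)) h" using e_left assms by simp
  also have "\<dots> = mul (mul (iv g) g) h" using inv_left assms by simp
  also have "\<dots> = mul (iv g) (mul g h)"
    using mul_assoc[of "iv g" g h] assms inv_closed tgt_inv by simp
  also have "\<dots> = mul (iv g) (e (tgt (iv g)))" using assms tgt_inv sb by simp
  also have "\<dots> = iv g" using e_right inv_closed assms by simp
  finally show ?thesis .
qed

lemma left_uniq:
  assumes "g \<in> G" "h \<in> G" "tgt g = src h" "mul g h = e b" "b \<in> B"
  shows "g = iv h"
proof -
  have tb: "tgt h = b" using tgt_mul[OF assms(1-3)] assms tgt_e by simp
  have "g = mul g (e (tgt g))" using e_right assms(1) by metis
  also have "\<dots> = mul g (mul h (iv h))" using inv_right assms by simp
  also have "\<dots> = mul (mul g h) (iv h)"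
    using mul_assoc[of g h "iv h"] assms inv_closed src_inv by simp
  also have "\<dots> = mul (e (src (iv h))) (iv h)" using assms src_inv tb by simp
  also have "\<dots> = iv h" using e_left inv_closed assms by simp
  finally show ?thesis .
qed

lemma setmul_memE:
  assumes "x \<in> setmul X Y"
  obtains a c where "a \<in> X" "c \<in> Y" "tgt a = src c" "mul a c = x"
  using assms unfolding setmul_def by blast

lemma setmul_memI:
  assumes "a \<in> X" "c \<in> Y" "tgt a = src c"
  shows "mul a c \<in> setmul X Y"
  using assms unfolding setmul_def by blast

lemma iv_iv: "g \<in> G \<Longrightarrow> iv (iv g) = g"
  using left_uniq[of g "iv g" "src g"] inv_closed src_inv inv_right src_surj by auto

lemma main:
  assumes LG: "L \<subseteq> G"
  shows "(\<exists>K \<subseteq> G. setmul L K = units \<and> setmul K L = units)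
         \<longleftrightarrow> (bij_betw src L B \<and> bij_betw tgt L B)"
proof
  assume "\<exists>K \<subseteq> G. setmul L K = units \<and> setmul K L = units"
  then obtain K where KG: "K \<subseteq> G" and LK: "setmul L K = units" and KL: "setmul K L = units"
    by blast
  have LKi: "k = iv l" if "l \<in> L" "k \<in> K" "tgt l = src k" for l k
  proof -
    have "mul l k \<in> units" using LK setmul_memI[OF that] by simp
    then obtain b where "b \<in> B" "mul l k = e b" unfolding units_def by auto
    then show ?thesis using right_uniq[of l k b] that LG KG by auto
  qed
  have KLi: "k = iv l" if "l \<in> L" "k \<in> K" "tgt k = src l" for l k
  proof -
    have "mul k l \<in> units" using KL setmul_memI[of k K l L] that by simp
    then obtain b where "b \<in> B" "mul k l = e b" unfolding units_def by auto
    then show ?thesis using left_uniq[of k l b] that LG KG by auto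
  qed
  have srcK: "\<exists>k\<in>K. src k = b" if "b \<in> B" for b
  proof -
    have "e b \<in> setmul K L" using KL that unfolding units_def by auto
    then obtain k l where "k \<in> K" "l \<in> L" "tgt k = src l" "mul k l = e b"
      by (rule setmul_memE)
    then have "k \<in> G" "l \<in> G" "tgt k = src l" "mul k l = e b" "k \<in> K" using LG KG by auto
    then have "src k = b" using src_mul[of k l] src_e[OF that] by simp
    then show ?thesis using \<open>k \<in> K\<close> by blast
  qed
  have tgtK: "\<exists>k\<in>K. tgt k = b" if "b \<in> B" for b
  proof -
    have "e b \<in> setmul L K" using LK that unfolding units_def by auto
    then obtain k l where "l \<in> L" "k \<in> K" "tgt l = src k" "mul l k = e b"
      by (rule setmul_memE)
    then have "l \<in> G" "k \<in> G" "tgt l = src k" "mul l k = e b" "k \<in> K" using LG KG by auto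
    then have "tgt k = b" using tgt_mul[of l k] tgt_e[OF that] by simp
    then show ?thesis using \<open>k \<in> K\<close> by blast
  qed
  have srcL: "\<exists>l\<in>L. src l = b" if "b \<in> B" for b
  proof -
    have "e b \<in> setmul L K" using LK that unfolding units_def by auto
    then obtain k l where "l \<in> L" "k \<in> K" "tgt l = src k" "mul l k = e b"
      by (rule setmul_memE)
    then have "l \<in> G" "k \<in> G" "tgt l = src k" "mul l k = e b" "l \<in> L" using LG KG by auto
    then have "src l = b" using src_mul[of l k] src_e[OF that] by simp
    then show ?thesis using \<open>l \<in> L\<close> by blast
  qed
  have tgtL: "\<exists>l\<in>L. tgt l = b" if "b \<in> B" for b
  proof -
    have "e b \<in> setmul K L" using KL that unfolding units_def by auto
    then obtain k l where "k \<in> K" "l \<in> L" "tgt k = src l" "mul k l = e b"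
      by (rule setmul_memE)
    then have "k \<in> G" "l \<in> G" "tgt k = src l" "mul k l = e b" "l \<in> L" using LG KG by auto
    then have "tgt l = b" using tgt_mul[of k l] tgt_e[OF that] by simp
    then show ?thesis using \<open>l \<in> L\<close> by blast
  qed
  have "inj_on src L"
  proof (rule inj_onI)
    fix l1 l2 assume l: "l1 \<in> L" "l2 \<in> L" "src l1 = src l2"
    have "tgt l1 \<in> B" using l LG tgt_surj by blast
    then obtain k where k: "k \<in> K" "src k = tgt l1" using srcK by blast
    have k1: "k = iv l1" using LKi[of l1 k] k l by simp
    have "tgt k = src l2" using k1 tgt_inv l LG by auto
    then have "k = iv l2" using KLi[of l2 k] k l by simp
    then show "l1 = l2" using k1 iv_iv l LG by (metis subsetD)
  qed
  moreover have "inj_on tgt L"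
  proof (rule inj_onI)
    fix l1 l2 assume l: "l1 \<in> L" "l2 \<in> L" "tgt l1 = tgt l2"
    have "src l1 \<in> B" using l LG src_surj by blast
    then obtain k where k: "k \<in> K" "tgt k = src l1" using tgtK by blast
    have k1: "k = iv l1" using KLi[of l1 k] k l by simp
    have "tgt l2 = src k" using k1 src_inv l LG by auto
    then have "k = iv l2" using LKi[of l2 k] k l by simp
    then show "l1 = l2" using k1 iv_iv l LG by (metis subsetD)
  qed
  moreover have "src ` L = B"
  proof
    show "src ` L \<subseteq> B" using LG src_surj by (metis image_mono)
    show "B \<subseteq> src ` L" using srcL by (metis imageI subsetI)
  qed
  moreover have "tgt ` L = B"
  proof
    show "tgt ` L \<subseteq> B" using LG tgt_surj by (metis image_mono)
    show "B \<subseteq> tgt ` L" using tgtL by (metis imageI subsetI)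
  qed
  ultimately show "bij_betw src L B \<and> bij_betw tgt L B" by (simp add: bij_betw_def)
next
  assume b: "bij_betw src L B \<and> bij_betw tgt L B"
  then have bj: "inj_on src L" "inj_on tgt L" "src ` L = B" "tgt ` L = B"
    by (auto simp: bij_betw_def)
  define K where "K = iv ` L"
  have "K \<subseteq> G" using K_def inv_closed LG by auto
  moreover have "setmul L K = units"
  proof
    show "setmul L K \<subseteq> units"
    proof
      fix x assume "x \<in> setmul L K"
      then obtain l l' where l: "l \<in> L" "l' \<in> L" "tgt l = src (iv l')" "x = mul l (iv l')"
        unfolding setmul_def K_def by blast
      then have "tgt l = tgt l'" using src_inv LG by auto
      then have "l = l'" using bj(2) l by (auto dest: inj_onD)
      then show "x \<in> units" using l inv_right LG src_surj unfolding units_def by auto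
    qed
  next
    show "units \<subseteq> setmul L K"
    proof
      fix x assume "x \<in> units"
      then obtain b where "b \<in> B" "x = e b" unfolding units_def by auto
      then obtain l where l: "l \<in> L" "src l = b" using bj(3) by auto
      then have "x = mul l (iv l)" "tgt l = src (iv l)" using inv_right src_inv LG \<open>x = e b\<close> by auto
      then show "x \<in> setmul L K" using l unfolding setmul_def K_def by blast
    qed
  qed
  moreover have "setmul K L = units"
  proof
    show "setmul K L \<subseteq> units"
    proof
      fix x assume "x \<in> setmul K L"
      then obtain l l' where l: "l \<in> L" "l' \<in> L" "tgt (iv l') = src l" "x = mul (iv l') l"
        unfolding setmul_def K_def by blast
      then have "src l = src l'" using tgt_inv LG by auto
      then have "l = l'" using bj(1) l by (auto dest: inj_onD)
      then show "x \<in> units" using l inv_left LG tgt_surj unfolding units_def by auto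
    qed
  next
    show "units \<subseteq> setmul K L"
    proof
      fix x assume "x \<in> units"
      then obtain b where "b \<in> B" "x = e b" unfolding units_def by auto
      then obtain l where l: "l \<in> L" "tgt l = b" using bj(4) by auto
      then have "x = mul (iv l) l" "tgt (iv l) = src l" using inv_left tgt_inv LG \<open>x = e b\<close> by auto
      then show "x \<in> setmul K L" using l unfolding setmul_def K_def by blast
    qed
  qed
  ultimately show "\<exists>K \<subseteq> G. setmul L K = units \<and> setmul K L = units" by blast
qed

end

theorem proposition7:
  fixes G :: "'g set" and B :: "'b set" and L :: "'g set"
    and src tgt :: "'g \<Rightarrow> 'b" and mul :: "'g \<Rightarrow> 'g \<Rightarrow> 'g"
    and e :: "'b \<Rightarrow> 'g" and iv :: "'g \<Rightarrow> 'g"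
  assumes "groupoid G B src tgt mul e iv"
    and "L \<subseteq> G"
  shows "(\<exists>K \<subseteq> G. groupoid.setmul src tgt mul L K = groupoid.units B e
                \<and> groupoid.setmul src tgt mul K L = groupoid.units B e)
         \<longleftrightarrow> (bij_betw src L B \<and> bij_betw tgt L B)"
  using groupoid.main[OF assms] .

end
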